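(* Let $d=2$, let $M\ge1$ be a real number, let $\alpha,\lambda\in\overline{\mathbb Q}$, and let $|\cdot|_v$ be an absolute value on $\overline{\mathbb Q}$. If $|\alpha|_v\ge\frac{|\lambda|_v}{M}\ge8M$, then for all integers $0\le n_0\le n$, $$\left|\frac{\log M_{n,v}}{2^n}-\frac{\log M_{n_0,v}}{2^{n_0}}\right|\le1+8M.$$
   Context: Define $A_0=\alpha$, $B_0=1$, and for $n\ge0$, $A_{n+1}=A_n^2+\lambda B_n^2$, $B_{n+1}=A_nB_n$ (so $[A_n:B_n]$ is the $n$-th iterate of $\alpha$ under $z\mapsto(z^2+\lambda)/z$). Set $M_{n,v}=\max\{|A_n|_v,|B_n|_v\}$. *)

theory Defs
  imports "HOL-Computational_Algebra.Polynomial" Complex_Main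
begin

definition Qbar :: "complex set" where
  "Qbar = {z. algebraic z}"

definition is_abs_value_on :: "complex set \<Rightarrow> (complex \<Rightarrow> real) \<Rightarrow> bool" where
  "is_abs_value_on S v \<longleftrightarrow>
     (\<forall>x\<in>S. v x \<ge> 0 \<and> (v x = 0 \<longleftrightarrow> x = 0)) \<and>
     (\<forall>x\<in>S. \<forall>y\<in>S. v (x * y) = v x * v y) \<and>
     (\<forall>x\<in>S. \<forall>y\<in>S. v (x + y) \<le> v x + v y)"

fun AB :: "complex \<Rightarrow> complex \<Rightarrow> nat \<Rightarrow> complex \<times> complex" where
  "AB al lam 0 = (al, 1)"
| "AB al lam (Suc n) =
     (let (a, b) = AB al lam n in (a^2 + lam * b^2, a * b))"

definition A :: "complex \<Rightarrow> complex \<Rightarrow> nat \<Rightarrow> complex" where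
  "A al lam n = fst (AB al lam n)"

definition B :: "complex \<Rightarrow> complex \<Rightarrow> nat \<Rightarrow> complex" where
  "B al lam n = snd (AB al lam n)"

definition Mv :: "(complex \<Rightarrow> real) \<Rightarrow> complex \<Rightarrow> complex \<Rightarrow> nat \<Rightarrow> real" where
  "Mv v al lam n = max (v (A al lam n)) (v (B al lam n))"

end

theory Submission
  imports Defs "HOL-Algebra.Finite_Extensions"
begin


abbreviation CR :: "complex ring" where
  "CR \<equiv> \<lparr>carrier = UNIV, mult = (*), one = 1, zero = 0, add = (+)\<rparr>"

lemma CR_cring: "cring CR"
proof (rule cringI)
  show "abelian_group CR"
    by (rule abelian_groupI) (auto intro: left_minus)
  show "Group.comm_monoid CR"
    by (simp add: Group.monoid.intro monoid.monoid_comm_monoidI)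
qed (auto simp: distrib_right)

lemma CR_Units: "Units CR = carrier CR - {\<zero>\<^bsub>CR\<^esub>}"
  unfolding Units_def apply auto
  by (metis field_class.field_inverse mult.commute)

lemma CR_field: "field CR"
  using cring.cring_fieldI[OF CR_cring CR_Units] .

lemma CR_ring: "ring CR" using CR_cring cring.axioms(1) by blast

lemma CR_minus: "\<ominus>\<^bsub>CR\<^esub> x = - x"
  by (rule abelian_group.minus_equality[OF ring.is_abelian_group[OF CR_ring]]) auto

lemma CR_pow: "x [^]\<^bsub>CR\<^esub> (n::nat) = x ^ n"
  by (induct n) auto

lemma CR_inv: assumes "x \<noteq> 0" shows "inv\<^bsub>CR\<^esub> x = inverse x"
proof -
  have "x \<in> Units CR" using CR_Units assms by auto
  show ?thesis
    by (rule monoid.inv_char[OF ring.is_monoid[OF CR_ring]]) (use assms in auto)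
qed

lemma CR_eval: "ring.eval CR q x = poly (Poly (rev q)) x"
proof (induct q)
  case Nil
  then show ?case by (simp add: ring.eval.simps[OF CR_ring])
next
  case (Cons a q)
  have "ring.eval CR (a # q) x = a * x ^ length q + ring.eval CR q x"
    by (simp add: ring.eval.simps[OF CR_ring] CR_pow)
  also have "\<dots> = poly (Poly (rev (a # q))) x"
    using Cons by (simp add: Poly_snoc poly_monom)
  finally show ?case .
qed

lemma CR_subfield: "subfield (\<rat>::complex set) CR"
proof (rule field.subfieldI'[OF CR_field])
  show "subring (\<rat>::complex set) CR"
    by (rule ring.subringI[OF CR_ring]) (auto simp: CR_minus)
  show "\<And>k. k \<in> (\<rat>::complex set) - {\<zero>\<^bsub>CR\<^esub>} \<Longrightarrow> inv\<^bsub>CR\<^esub> k \<in> \<rat>"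
    by (auto simp: CR_inv)
qed

lemma alg_to_CR:
  assumes "algebraic (x::complex)"
  shows "\<not> ring.transcendental CR \<rat> x"
proof -
  obtain p where p: "\<forall>i. poly.coeff p i \<in> \<rat>" "p \<noteq> 0" "poly p x = 0"
    using assms algebraic_altdef by blast
  let ?q = "rev (coeffs p)"
  have "?q \<in> carrier (\<rat> [X]\<^bsub>CR\<^esub>)"
  proof -
    have "set (coeffs p) \<subseteq> \<rat>" using p(1) by (auto simp: coeffs_def)
    moreover have "hd ?q \<noteq> 0" using p(2)
      by (simp add: hd_rev last_coeffs_eq_coeff_degree)
    ultimately show ?thesis
      unfolding univ_poly_carrier[symmetric] polynomial_def by simp
  qed
  moreover have "?q \<noteq> []" using p(2) by simp
  moreover have "ring.eval CR ?q x = \<zero>\<^bsub>CR\<^esub>"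
    using p(3) by (simp add: CR_eval)
  ultimately show ?thesis
    using ring.algebraicI[OF CR_ring] unfolding over_def by blast
qed

lemma CR_to_alg:
  assumes "\<not> ring.transcendental CR \<rat> (x::complex)"
  shows "algebraic x"
proof -
  have ov: "((\<lambda>K x. \<not> ring.transcendental CR K x) over \<rat>) x" using assms by (simp add: over_def)
  have xc: "x \<in> carrier CR" by simp
  obtain q where q: "q \<in> carrier (\<rat> [X]\<^bsub>CR\<^esub>)" "q \<noteq> []" "ring.eval CR q x = \<zero>\<^bsub>CR\<^esub>"
    using domain.algebraicE[OF field.axioms(1)[OF CR_field] subfieldE(1)[OF CR_subfield] xc ov] by blast
  have qs: "set q \<subseteq> \<rat>" "hd q \<noteq> 0"
    using q(1,2) unfolding univ_poly_carrier[symmetric] polynomial_def by auto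
  have "Poly (rev q) \<noteq> 0"
  proof
    assume "Poly (rev q) = 0"
    then have "poly.coeff (Poly (rev q)) (length q - 1) = 0" by simp
    moreover have "poly.coeff (Poly (rev q)) (length q - 1) = hd q"
      using q(2) by (simp add: nth_default_def hd_conv_nth rev_nth)
    ultimately show False using qs by simp
  qed
  moreover have "\<forall>i. poly.coeff (Poly (rev q)) i \<in> \<rat>"
    using qs(1) by (auto simp: nth_default_def) (metis in_mono length_rev nth_mem set_rev)
  moreover have "poly (Poly (rev q)) x = 0" using q(3) by (simp add: CR_eval)
  ultimately show ?thesis using algebraic_altdef by blast
qed

lemma alg_CR_iff: "algebraic (x::complex) \<longleftrightarrow> \<not> ring.transcendental CR \<rat> x"
  using alg_to_CR CR_to_alg by blast

lemma alg_plus: "algebraic (x::complex) \<Longrightarrow> algebraic y \<Longrightarrow> algebraic (x + y)"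
  and alg_mult: "algebraic (x::complex) \<Longrightarrow> algebraic y \<Longrightarrow> algebraic (x * y)"
  using subringE(6,7)[OF subfieldE(1)[OF field.subfield_of_algebraics[OF CR_field CR_subfield]], of x y]
  by (auto simp: alg_CR_iff over_def)



lemma ln_bound_gen:
  fixes m m' T c :: real
  assumes "m > 0" "m' > 0" "T \<ge> 1" "m^2 / T \<le> m'" "m' \<le> T * m^2" "ln T \<le> c"
  shows "\<bar>ln m' - 2 * ln m\<bar> \<le> c"
proof -
  have T0: "T > 0" using assms by simp
  have "ln m' \<le> ln (T * m^2)" using assms by (subst ln_le_cancel_iff) auto
  also have "\<dots> = ln T + 2 * ln m" using assms T0 by (simp add: ln_mult ln_realpow)
  finally have 1: "ln m' \<le> ln T + 2 * ln m" .
  have "ln (m^2 / T) \<le> ln m'" using assms T0 by (subst ln_le_cancel_iff) auto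
  moreover have "ln (m^2/T) = 2 * ln m - ln T" using assms T0 by (simp add: ln_div ln_realpow)
  ultimately have 2: "2 * ln m - ln T \<le> ln m'" by simp
  show ?thesis using 1 2 assms(6) by linarith
qed

lemma key_real:
  fixes x y :: "nat \<Rightarrow> real" and L M :: real
  assumes M1: "M \<ge> 1" and LM: "L \<ge> 8 * M^2"
    and x0: "x 0 \<ge> L / M" and y0: "y 0 = 1"
    and nn: "\<And>n. x n \<ge> 0 \<and> y n \<ge> 0"
    and r1: "\<And>n. x (Suc n) \<le> (x n)^2 + L * (y n)^2"
    and r2: "\<And>n. x (Suc n) \<ge> (x n)^2 - L * (y n)^2"
    and r3: "\<And>n. x (Suc n) \<ge> L * (y n)^2 - (x n)^2"
    and r4: "\<And>n. y (Suc n) = x n * y n"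
  shows "\<And>k. \<bar>ln (max (x (Suc k)) (y (Suc k))) - 2 * ln (max (x k) (y k))\<bar> \<le> 2 * M + k + 1"
    and "\<And>n. max (x n) (y n) > 0"
proof -
  have Mpos: "M > 0" using M1 by simp
  have L8: "L \<ge> 8" using LM one_le_power[OF M1, of 2] by linarith
  have inv: "4 * M^2 * n \<le> L \<Longrightarrow> x n \<ge> (L / M - 2 * n * M) * y n" for n
  proof (induct n)
    case 0 then show ?case using x0 y0 by simp
  next
    case (Suc n)
    define \<rho> where "\<rho> = L / M - 2 * n * M"
    have nle: "4 * M^2 * n \<le> L"
    proof -
      have "4 * M^2 * n \<le> 4 * M^2 * real (Suc n)" by (simp add: mult_left_mono)
      thus ?thesis using Suc(2) by linarith
    qed
    have h: "x n \<ge> \<rho> * y n" using Suc(1)[OF nle] by (simp add: \<rho>_def)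
    have "2 * M * \<rho> = 2 * L - 4 * M^2 * n" unfolding \<rho>_def using Mpos
      by (simp add: field_simps power2_eq_square)
    hence r: "2 * M * \<rho> \<ge> L" using nle by simp
    have xn: "x n \<ge> 0" "y n \<ge> 0" using nn by auto
    have a: "x n * (x n - \<rho> * y n) \<ge> 0" using h xn by simp
    have b: "2 * M * x n * y n \<ge> L * (y n)^2"
    proof -
      have "2 * M * x n * y n \<ge> 2 * M * (\<rho> * y n) * y n"
        using h xn Mpos by (intro mult_right_mono mult_left_mono) auto
      also have "2 * M * (\<rho> * y n) * y n = (2 * M * \<rho>) * (y n)^2" by (simp add: power2_eq_square)
      finally show ?thesis using r mult_right_mono[OF r, of "(y n)^2"] by simp
    qed
    have "x (Suc n) \<ge> (\<rho> - 2 * M) * y (Suc n)"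
      using r2[of n] r4[of n] a b by (simp add: algebra_simps power2_eq_square)
    moreover have "\<rho> - 2 * M = L / M - 2 * real (Suc n) * M" unfolding \<rho>_def by (simp add: algebra_simps)
    ultimately show ?case by simp
  qed
  show pos: "max (x n) (y n) > 0" for n
  proof (induct n)
    case 0 then show ?case using y0 by simp
  next
    case (Suc n)
    have xn: "x n \<ge> 0" "y n \<ge> 0" using nn by auto
    show ?case
    proof (cases "x n = 0")
      case True
      then have "y n > 0" using Suc xn by auto
      moreover have "L * (y n)^2 > 0" using L8 \<open>y n > 0\<close> by simp
      ultimately have "x (Suc n) > 0" using r3[of n] True by simp
      then show ?thesis by simp
    next
      case False
      show ?thesis
      proof (cases "y n = 0")
        case True
        have "(x n)^2 > 0" using False by simp
        moreover have "x (Suc n) \<ge> (x n)^2" using r2[of n] True by simp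
        ultimately have "x (Suc n) > 0" by linarith
        then show ?thesis by (simp add: less_max_iff_disj)
      next
        case f2: False
        have "x n * y n > 0" using False f2 xn by simp
        then show ?thesis using r4[of n] by (simp add: less_max_iff_disj)
      qed
    qed
  qed
  show "\<bar>ln (max (x (Suc k)) (y (Suc k))) - 2 * ln (max (x k) (y k))\<bar> \<le> 2 * M + k + 1" for k
  proof -
    define m where "m = max (x k) (y k)"
    define m' where "m' = max (x (Suc k)) (y (Suc k))"
    have m0: "m > 0" "m' > 0" using pos unfolding m_def m'_def by auto
    have xn: "x k \<ge> 0" "y k \<ge> 0" using nn by auto
    show ?thesis
    proof (cases "4 * M^2 * k \<le> L")
      case True
      define s where "s = L / (2 * M)"
      have "x k \<ge> (L / M - 2 * k * M) * y k" using inv True by simp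
      moreover have "L / M - 2 * k * M \<ge> s"
      proof -
        have "L / M - 2 * k * M - s = (L - 4 * M^2 * k) / (2 * M)"
          unfolding s_def using Mpos by (simp add: field_simps power2_eq_square)
        also have "\<dots> \<ge> 0" using True Mpos by simp
        finally show ?thesis by simp
      qed
      ultimately have xs: "x k \<ge> s * y k" using xn by (meson mult_right_mono order_trans)
      have s2: "s^2 \<ge> 2 * L"
      proof -
        have "s^2 = L * (L / (4 * M^2))" unfolding s_def by (simp add: power2_eq_square field_simps)
        moreover have "L / (4 * M^2) \<ge> 2" using LM Mpos by (simp add: field_simps)
        moreover have "L * 2 \<le> L * (L / (4 * M^2))" using L8 \<open>L / (4 * M^2) \<ge> 2\<close> by (intro mult_left_mono) auto
        ultimately show ?thesis by (simp only: mult.commute[of 2])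
      qed
      have spos: "s > 0" unfolding s_def using L8 Mpos by simp
      have s1: "s \<ge> 1"
      proof (rule ccontr)
        assume "\<not> s \<ge> 1"
        hence "s * s < 1 * 1" using spos by (intro mult_strict_mono) auto
        thus False using s2 L8 by (simp add: power2_eq_square)
      qed
      have yle: "y k \<le> x k"
      proof -
        have "1 * y k \<le> s * y k" using s1 xn by (intro mult_right_mono) auto
        thus ?thesis using xs by simp
      qed
      have mx: "m = x k" unfolding m_def using yle by (simp add: max_def)
      have Ly: "L * (y k)^2 \<le> (x k)^2 / 2"
      proof -
        have "(s * y k)^2 \<le> (x k)^2" using xs xn s1 by (intro power_mono) auto
        hence "s^2 * (y k)^2 \<le> (x k)^2" by (simp add: power_mult_distrib)
        moreover have "2 * L * (y k)^2 \<le> s^2 * (y k)^2" using s2 by (intro mult_right_mono) auto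
        ultimately show ?thesis by simp
      qed
      have yx: "x k * y k \<le> (x k)^2" using yle xn
        by (simp add: power2_eq_square mult_left_mono)
      have lo: "m^2 / 2 \<le> m'"
      proof -
        have "x (Suc k) \<ge> (x k)^2 / 2" using r2[of k] Ly by simp
        moreover have "x (Suc k) \<le> m'" unfolding m'_def by simp
        ultimately show ?thesis using mx by simp
      qed
      have hi: "m' \<le> 2 * m^2"
      proof -
        have "L * (y k)^2 \<ge> 0" using L8 by simp
        hence "x (Suc k) \<le> 2 * (x k)^2" using r1[of k] Ly by linarith
        moreover have "y (Suc k) \<le> 2 * (x k)^2" using r4[of k] yx zero_le_power2[of "x k"] by linarith
        ultimately show ?thesis unfolding m'_def using mx by simp
      qed
      have "\<bar>ln m' - 2 * ln m\<bar> \<le> 1"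
        by (rule ln_bound_gen[OF m0(1) m0(2), of 2]) (use lo hi ln_2_less_1 in auto)
      then show ?thesis unfolding m_def m'_def using Mpos by simp
    next
      case False
      define T where "T = 1 + L"
      have T1: "T \<ge> 1" using L8 T_def by simp
      have xm: "x k \<le> m" "y k \<le> m" unfolding m_def by auto
      have hi: "m' \<le> T * m^2"
      proof -
        have sq: "(x k)^2 \<le> m^2" "(y k)^2 \<le> m^2" using xm xn by (auto intro: power_mono)
        have "L * (y k)^2 \<le> L * m^2" using sq(2) L8 by (intro mult_left_mono) auto
        moreover have "T * m^2 = m^2 + L * m^2" unfolding T_def by (simp add: algebra_simps)
        ultimately have "x (Suc k) \<le> T * m^2" using r1[of k] sq(1) by linarith
        moreover have "y (Suc k) \<le> T * m^2"
        proof -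
          have "y (Suc k) \<le> m * m" using r4[of k] xm xn by (simp add: mult_mono)
          also have "\<dots> = 1 * m^2" by (simp add: power2_eq_square)
          also have "\<dots> \<le> T * m^2" using T1 by (intro mult_right_mono) auto
          finally show ?thesis .
        qed
        ultimately show ?thesis unfolding m'_def by simp
      qed
      have lo: "m^2 / T \<le> m'"
      proof (cases "x k \<ge> y k")
        case True
        then have mx: "m = x k" unfolding m_def by simp
        show ?thesis
        proof (cases "(x k)^2 \<ge> 2 * L * (y k)^2")
          case True
          have "x (Suc k) \<ge> (x k)^2 / 2" using r2[of k] True by simp
          moreover have "x (Suc k) \<le> m'" unfolding m'_def by simp
          moreover have "(x k)^2 / T \<le> (x k)^2 / 2" using T_def L8
            by (intro divide_left_mono) auto
          ultimately have "(x k)^2 / T \<le> m'" by linarith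
          thus ?thesis using mx by simp
        next
          case False
          have "x k \<le> T * y k"
          proof -
            have "(x k)^2 \<le> 2 * L * (y k)^2" using False by simp
            also have "\<dots> \<le> (T * y k)^2"
            proof -
              have "T^2 = 1 + 2*L + L^2" unfolding T_def by (simp add: power2_eq_square algebra_simps)
              hence "2 * L \<le> T^2" using zero_le_power2[of L] by linarith
              thus ?thesis by (simp add: power_mult_distrib mult_right_mono)
            qed
            finally have "(x k)^2 \<le> (T * y k)^2" .
            moreover have "0 \<le> T * y k" using xn T1 by simp
            ultimately show ?thesis by (rule power2_le_imp_le)
          qed
          hence "x k * x k \<le> x k * (T * y k)" using xn by (intro mult_left_mono) auto
          hence "(x k)^2 \<le> (x k * y k) * T" by (simp add: power2_eq_square mult_ac)
          hence "(x k)^2 / T \<le> x k * y k" using T1 by (simp add: pos_divide_le_eq)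
          moreover have "y (Suc k) \<le> m'" unfolding m'_def by simp
          ultimately show ?thesis using r4[of k] mx by simp
        qed
      next
        case False
        then have my: "m = y k" unfolding m_def by simp
        have "(x k)^2 \<le> (y k)^2" using False xn by (intro power_mono) auto
        moreover have "(L - 1) * (y k)^2 = L * (y k)^2 - (y k)^2" by (simp add: algebra_simps)
        ultimately have "x (Suc k) \<ge> (L - 1) * (y k)^2"
          using r3[of k] by linarith
        moreover have "(y k)^2 / T \<le> (L - 1) * (y k)^2"
        proof -
          have "1 / T \<le> 1" using T1 by simp
          hence "1 / T \<le> L - 1" using L8 by linarith
          hence "(1 / T) * (y k)^2 \<le> (L - 1) * (y k)^2" by (intro mult_right_mono) auto
          thus ?thesis by simp
        qed
        moreover have "x (Suc k) \<le> m'" unfolding m'_def by simp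
        ultimately show ?thesis using my by simp
      qed
      have lnT: "ln T \<le> 2 * M + k + 1"
      proof -
        have M21: "M^2 \<ge> 1" using one_le_power[OF M1, of 2] .
        have "4 * (M^2 * (k + 1)) = 4 * M^2 * k + 4 * M^2" by (simp add: algebra_simps)
        hence "T \<le> 4 * (M^2 * (k + 1))" using False M21 unfolding T_def by linarith
        hence "ln T \<le> ln (4 * (M^2 * (k + 1)))" using T1 by (subst ln_le_cancel_iff) auto
        also have "\<dots> = ln 4 + 2 * ln M + ln (k + 1)" using Mpos
          by (simp add: ln_mult ln_realpow)
        also have "\<dots> \<le> 2 + 2 * (M - 1) + k"
        proof -
          have "ln (4::real) \<le> 2"
          proof -
            have e1: "exp (1::real) \<ge> 2" using exp_ge_add_one_self[of 1] by simp
            have "exp (1::real) * exp 1 \<ge> 2 * 2" using e1 by (intro mult_mono) auto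
            hence "exp (2::real) \<ge> 4" using exp_add[of "1::real" 1] by simp
            hence "ln 4 \<le> ln (exp (2::real))" by (subst ln_le_cancel_iff) auto
            thus ?thesis by simp
          qed
          moreover have "ln M \<le> M - 1" using Mpos ln_le_minus_one by simp
          moreover have "ln (real k + 1) \<le> k" using ln_le_minus_one[of "real k + 1"] by simp
          ultimately show ?thesis by (simp add: add.commute)
        qed
        finally show ?thesis by simp
      qed
      have "\<bar>ln m' - 2 * ln m\<bar> \<le> 2 * M + k + 1"
        by (rule ln_bound_gen[OF m0(1) m0(2) T1 lo hi lnT])
      then show ?thesis unfolding m_def m'_def .
    qed
  qed
qed


lemma tele:
  fixes m :: "nat \<Rightarrow> real" and M :: real
  assumes M1: "M \<ge> 1" and st: "\<And>k. \<bar>ln (m (Suc k)) - 2 * ln (m k)\<bar> \<le> 2 * M + k + 1"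
    and le: "n0 \<le> n"
  shows "\<bar>ln (m n) / 2 ^ n - ln (m n0) / 2 ^ n0\<bar> \<le> 1 + 8 * M"
proof -
  define f where "f k = ln (m k) / 2 ^ k" for k
  define g where "g k = (2 * M + k + 2) / 2 ^ k" for k :: nat
  have step: "\<bar>f (Suc k) - f k\<bar> \<le> g k - g (Suc k)" for k
  proof -
    have "f (Suc k) - f k = (ln (m (Suc k)) - 2 * ln (m k)) / 2 ^ Suc k"
      unfolding f_def by (simp add: field_simps)
    hence "\<bar>f (Suc k) - f k\<bar> = \<bar>ln (m (Suc k)) - 2 * ln (m k)\<bar> / 2 ^ Suc k"
      by simp
    also have "\<dots> \<le> (2 * M + k + 1) / 2 ^ Suc k"
      using st[of k] by (intro divide_right_mono) auto
    also have "\<dots> = g k - g (Suc k)" unfolding g_def by (simp add: field_simps)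
    finally show ?thesis .
  qed
  have ind: "\<bar>f (n0 + j) - f n0\<bar> \<le> g n0 - g (n0 + j)" for j
  proof (induct j)
    case 0 then show ?case by simp
  next
    case (Suc j)
    have "\<bar>f (n0 + Suc j) - f n0\<bar> \<le> \<bar>f (Suc (n0 + j)) - f (n0 + j)\<bar> + \<bar>f (n0 + j) - f n0\<bar>"
      by simp
    also have "\<dots> \<le> (g (n0 + j) - g (Suc (n0 + j))) + (g n0 - g (n0 + j))"
      using step[of "n0 + j"] Suc by linarith
    finally show ?case by simp
  qed
  obtain j where j: "n = n0 + j" using le le_Suc_ex by blast
  have gpos: "g k \<ge> 0" for k unfolding g_def using M1 by simp
  have pw: "real k + 1 \<le> 2 ^ k" for k :: nat
  proof (induct k)
    case 0 then show ?case by simp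
  next
    case (Suc k)
    have "(1::real) \<le> 2 ^ k" by simp
    then show ?case using Suc by simp
  qed
  have g0: "g n0 \<le> 2 * M + 2"
  proof -
    have "2 * M + n0 + 2 \<le> (2 * M + 2) * (real n0 + 1)"
      using M1 by (simp add: algebra_simps)
    also have "\<dots> \<le> (2 * M + 2) * 2 ^ n0" using pw[of n0] M1 by (intro mult_left_mono) auto
    finally show ?thesis unfolding g_def by (simp add: divide_le_eq)
  qed
  have "\<bar>f n - f n0\<bar> \<le> 1 + 8 * M" using ind[of j] j gpos[of n] g0 M1 by simp
  then show ?thesis unfolding f_def .
qed

lemma AB_Suc:
  "A al lam (Suc n) = (A al lam n)^2 + lam * (B al lam n)^2"
  "B al lam (Suc n) = A al lam n * B al lam n"
  unfolding A_def B_def by (simp_all split: prod.split)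

lemma AB_Qbar:
  assumes "al \<in> Qbar" "lam \<in> Qbar"
  shows "A al lam n \<in> Qbar \<and> B al lam n \<in> Qbar"
proof (induct n)
  case 0 then show ?case using assms by (simp add: A_def B_def Qbar_def)
next
  case (Suc n)
  then show ?case using assms unfolding AB_Suc Qbar_def
    by (auto simp: power2_eq_square intro!: alg_plus alg_mult)
qed

theorem proposition6p4:
  fixes M :: real and al lam :: complex and v :: "complex \<Rightarrow> real" and n0 n :: nat
  assumes "M \<ge> 1"
    and "al \<in> Qbar" and "lam \<in> Qbar"
    and "is_abs_value_on Qbar v"
    and "v al \<ge> v lam / M" and "v lam / M \<ge> 8 * M"
    and "n0 \<le> n"
  shows "\<bar>ln (Mv v al lam n) / 2 ^ n - ln (Mv v al lam n0) / 2 ^ n0\<bar> \<le> 1 + 8 * M"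
proof -
  note av = assms(4)[unfolded is_abs_value_on_def]
  have nn: "\<And>z. z \<in> Qbar \<Longrightarrow> v z \<ge> 0" using av by blast
  have mul: "\<And>a b. a \<in> Qbar \<Longrightarrow> b \<in> Qbar \<Longrightarrow> v (a * b) = v a * v b" using av by blast
  have tri: "\<And>a b. a \<in> Qbar \<Longrightarrow> b \<in> Qbar \<Longrightarrow> v (a + b) \<le> v a + v b" using av by blast
  have Q1: "1 \<in> Qbar" "-1 \<in> Qbar" by (auto simp: Qbar_def)
  have QP: "a \<in> Qbar \<Longrightarrow> b \<in> Qbar \<Longrightarrow> a + b \<in> Qbar" for a b by (simp add: Qbar_def alg_plus)
  have QM: "a \<in> Qbar \<Longrightarrow> b \<in> Qbar \<Longrightarrow> a * b \<in> Qbar" for a b by (simp add: Qbar_def alg_mult)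
  have QN: "a \<in> Qbar \<Longrightarrow> - a \<in> Qbar" for a using QM[OF Q1(2), of a] by simp
  have v1: "v 1 = 1"
  proof -
    have "v 1 = v 1 * v 1" using mul[OF Q1(1) Q1(1)] by simp
    moreover have "v 1 \<noteq> 0" using av Q1 by auto
    ultimately show ?thesis by simp
  qed
  have vm1: "v (-1) = 1"
  proof -
    have "v (-1) * v (-1) = 1" using mul[OF Q1(2) Q1(2)] v1 by simp
    moreover have "v (-1) \<ge> 0" using nn Q1 by blast
    moreover have "(v (-1) - 1) * (v (-1) + 1) = v (-1) * v (-1) - 1" by (simp add: algebra_simps)
    ultimately have "(v (-1) - 1) * (v (-1) + 1) = 0" by simp
    moreover have "v (-1) + 1 \<noteq> 0" using \<open>v (-1) \<ge> 0\<close> by simp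
    ultimately show ?thesis by simp
  qed
  have vneg: "a \<in> Qbar \<Longrightarrow> v (- a) = v a" for a using mul[OF Q1(2), of a] vm1 by simp
  have vsq: "a \<in> Qbar \<Longrightarrow> v (a^2) = (v a)^2" for a using mul[of a a] by (simp add: power2_eq_square)
  define x where "x k = v (A al lam k)" for k
  define y where "y k = v (B al lam k)" for k
  define L where "L = v lam"
  have Mpos: "M > 0" using assms(1) by simp
  have LM: "L \<ge> 8 * M^2" using assms(6) Mpos unfolding L_def by (simp add: field_simps power2_eq_square)
  have Qk: "A al lam k \<in> Qbar" "B al lam k \<in> Qbar" for k using AB_Qbar[OF assms(2,3)] by auto
  have keyrel: "x (Suc k) \<le> (x k)^2 + L * (y k)^2 \<and> x (Suc k) \<ge> (x k)^2 - L * (y k)^2 \<and>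
     x (Suc k) \<ge> L * (y k)^2 - (x k)^2 \<and> y (Suc k) = x k * y k" for k
  proof -
    define a where "a = (A al lam k)^2"
    define c where "c = lam * (B al lam k)^2"
    have qa: "a \<in> Qbar" unfolding a_def using QM[OF Qk(1) Qk(1)] by (simp add: power2_eq_square)
    have qc: "c \<in> Qbar" unfolding c_def using QM[OF assms(3) QM[OF Qk(2) Qk(2)]] by (simp add: power2_eq_square)
    have va: "v a = (x k)^2" unfolding a_def x_def using vsq Qk by simp
    have vc: "v c = L * (y k)^2" unfolding c_def y_def L_def using mul[OF assms(3)] vsq Qk
      by (simp add: QM power2_eq_square)
    have xs: "x (Suc k) = v (a + c)" unfolding x_def a_def c_def AB_Suc ..
    have t1: "v (a + c) \<le> v a + v c" by (rule tri[OF qa qc])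
    have "v a = v ((a + c) + (- c))" by simp
    also have "\<dots> \<le> v (a + c) + v c" using tri[OF QP[OF qa qc] QN[OF qc]] vneg[OF qc] by simp
    finally have t2: "v a \<le> v (a + c) + v c" .
    have "v c = v ((a + c) + (- a))" by simp
    also have "\<dots> \<le> v (a + c) + v a" using tri[OF QP[OF qa qc] QN[OF qa]] vneg[OF qa] by simp
    finally have t3: "v c \<le> v (a + c) + v a" .
    have ys: "y (Suc k) = x k * y k" unfolding x_def y_def AB_Suc using mul Qk by simp
    show ?thesis using t1 t2 t3 xs ys va vc by linarith
  qed
  have kr:
    "\<And>k. \<bar>ln (max (x (Suc k)) (y (Suc k))) - 2 * ln (max (x k) (y k))\<bar> \<le> 2 * M + k + 1"
    apply (rule key_real(1)[of M L x y])
    using assms(1) LM assms(5) keyrel nn Qk v1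
    by (auto simp: x_def y_def L_def A_def[of al lam 0] B_def[of al lam 0])
  have "\<bar>ln (max (x n) (y n)) / 2 ^ n - ln (max (x n0) (y n0)) / 2 ^ n0\<bar> \<le> 1 + 8 * M"
    by (rule tele[OF assms(1) kr assms(7)])
  then show ?thesis unfolding Mv_def x_def y_def .
qed

end
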